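(* Let $P,Q$ be convex $n$-dimensional polytopes in an $n$-dimensional real vector space $E$, each containing the origin in its interior, and let $X=\partial P$, $Y=\partial Q$. Let $\psi:\mathcal F(X)\to\mathcal F(Y)$ be an order-preserving map and $\psi^*:\mathcal F(\partial P^\circ)\to\mathcal F(\partial Q^\circ)$ its dual map. Then $\operatorname{c.deg}\psi=\operatorname{c.deg}\psi^*$.
   Context: For a convex $n$-dimensional polytope $P$, the boundary $\partial P$ (with its faces) is an $(n-1)$-dimensional polyhedral set; $\mathcal F(\partial P)$ is the set of proper faces of $P$ ordered by inclusion. For an order-preserving $\psi:\mathcal F(\partial P)\to\mathcal F(\partial Q)$, a continuous map $f:\partial P\to\partial Q$ is characteristic for $\psi$ if $f(G)\subset\psi(G)$ for all $G$; such maps exist and are all homotopic. Orienting $P$ and $Q$ gives isomorphisms $H_{n-1}(\partial P)\cong\mathbb Z\cong H_{n-1}(\partial Q)$, under which $H_{n-1}(f)$ is multiplication by an integer, called the combinatorial degree $\operatorname{c.deg}\psi$. Here $P,Q$ are oriented by a fixed orientation of $E$, and $P^\circ,Q^\circ$ by the dual orientation of $E^*$. The polar polytope is $P^\circ=\{v\in E^*:\langle u,v\rangle\ge -1\ \forall u\in P\}$; there is an order-reversing bijection $G\mapsto G^*$ from proper faces of $P$ to proper faces of $P^\circ$ with $\dim G^*=n-1-\dim G$. The dual map is defined by $\psi^*(G^* )=(\psi(G))^*$; it is order-preserving. *)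

theory Defs
  imports "HOL-Analysis.Analysis" "HOL-Homology.Homology"
begin

text \<open>The space E is real^'n (dimension n = CARD('n)); the dual space E* is identified
  with real^'n via the standard inner product (the dual orientation of the standard
  orientation is then again the standard orientation).\<close>

text \<open>Proper faces of a polytope P: nonempty faces different from P.
  For an n-dimensional polytope these are exactly the faces of the boundary complex.\<close>
definition proper_faces :: "(real^'n) set \<Rightarrow> (real^'n) set set" where
  "proper_faces P = {F. F face_of P \<and> F \<noteq> {} \<and> F \<noteq> P}"

definition polar :: "(real^'n) set \<Rightarrow> (real^'n) set" where
  "polar P = {v. \<forall>u\<in>P. u \<bullet> v \<ge> -1}"

definition dual_face :: "(real^'n) set \<Rightarrow> (real^'n) set \<Rightarrow> (real^'n) set" where
  "dual_face P G = {v \<in> polar P. \<forall>u\<in>G. u \<bullet> v = -1}"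

definition order_preserving_faces ::
    "(real^'n) set \<Rightarrow> (real^'n) set \<Rightarrow> ((real^'n) set \<Rightarrow> (real^'n) set) \<Rightarrow> bool" where
  "order_preserving_faces P Q \<psi> \<longleftrightarrow>
     (\<forall>G\<in>proper_faces P. \<psi> G \<in> proper_faces Q) \<and>
     (\<forall>G\<in>proper_faces P. \<forall>H\<in>proper_faces P. G \<subseteq> H \<longrightarrow> \<psi> G \<subseteq> \<psi> H)"

text \<open>Dual map: psi*(G*) = (psi G)*, i.e. for a proper face H of the polar of P,
  psi*(H) = (psi G)* where G is the unique proper face of P with G* = H.\<close>
definition dual_map ::
    "(real^'n) set \<Rightarrow> (real^'n) set \<Rightarrow> ((real^'n) set \<Rightarrow> (real^'n) set) \<Rightarrow> (real^'n) set \<Rightarrow> (real^'n) set" where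
  "dual_map P Q \<psi> H = dual_face Q (\<psi> (THE G. G \<in> proper_faces P \<and> dual_face P G = H))"

definition characteristic_map ::
    "(real^'n) set \<Rightarrow> (real^'n) set \<Rightarrow> ((real^'n) set \<Rightarrow> (real^'n) set) \<Rightarrow> (real^'n \<Rightarrow> real^'n) \<Rightarrow> bool" where
  "characteristic_map P Q \<psi> f \<longleftrightarrow>
     continuous_map (subtopology euclidean (frontier P)) (subtopology euclidean (frontier Q)) f \<and>
     (\<forall>G\<in>proper_faces P. f ` G \<subseteq> \<psi> G)"

text \<open>Degree of a map f from the boundary of P to the boundary of Q (both containing the
  origin in their interior), where both boundaries carry the boundary orientation induced
  by the same orientation of E. Both inclusions of the boundaries into E - {0} induce
  isomorphisms on (reduced) homology in degree n-1, compatible with these orientations;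
  so H_(n-1)(f) is multiplication by d iff for every class c of the boundary of P,
  (incl_Q o f)_*(c) = d * (incl_P)_*(c) in H_(n-1)(E - {0}).\<close>
definition map_degree_is ::
    "(real^'n) set \<Rightarrow> (real^'n) set \<Rightarrow> (real^'n \<Rightarrow> real^'n) \<Rightarrow> int \<Rightarrow> bool" where
  "map_degree_is P Q f d \<longleftrightarrow>
     (\<forall>c \<in> carrier (reduced_homology_group (int CARD('n) - 1) (subtopology euclidean (frontier P))).
        hom_induced (int CARD('n) - 1) (subtopology euclidean (frontier P)) {}
                    (subtopology euclidean (- {0})) {} f c
      = pow (homology_group (int CARD('n) - 1) (subtopology euclidean (- {0})))
            (hom_induced (int CARD('n) - 1) (subtopology euclidean (frontier P)) {}
                    (subtopology euclidean (- {0})) {} id c) d)"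

definition cdeg ::
    "(real^'n) set \<Rightarrow> (real^'n) set \<Rightarrow> ((real^'n) set \<Rightarrow> (real^'n) set) \<Rightarrow> int" where
  "cdeg P Q \<psi> = (THE d. \<exists>f. characteristic_map P Q \<psi> f \<and> map_degree_is P Q f d)"

end

theory Submission
  imports Defs
begin

lemma polar_eq: "polar P = (\<Inter>u\<in>P. {v. u \<bullet> v \<ge> -1})"
  by (auto simp: polar_def)

lemma polar_ge: "u \<in> P \<Longrightarrow> v \<in> polar P \<Longrightarrow> u \<bullet> v \<ge> -1"
  by (auto simp: polar_def)

lemma convex_polar: "convex (polar P)"
  unfolding polar_eq by (intro convex_INT ballI convex_halfspace_ge)

lemma closed_polar: "closed (polar P)"
  unfolding polar_eq by (intro closed_INT ballI closed_halfspace_ge)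

lemma bounded_polar:
  fixes P :: "(real^'n) set"
  assumes "0 \<in> interior P"
  shows "bounded (polar P)"
proof -
  obtain e where e: "e > 0" "ball 0 e \<subseteq> P"
    using assms mem_interior by blast
  have "norm v \<le> 2 / e" if v: "v \<in> polar P" for v
  proof (cases "v = 0")
    case False
    define u where "u = (- (e/2) / norm v) *\<^sub>R v"
    have "norm u = e/2" using False e by (simp add: u_def norm_scaleR)
    then have "u \<in> P" using e by auto
    then have "u \<bullet> v \<ge> -1" using v polar_ge by blast
    moreover have "u \<bullet> v = - (e/2) * norm v"
      using False by (simp add: u_def inner_scaleR_left dot_square_norm power2_eq_square)
    ultimately have "(e/2) * norm v \<le> 1" by linarith
    then show ?thesis using e by (simp add: field_simps)
  qed (use e in simp)
  then show ?thesis by (meson bounded_iff)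
qed

lemma zero_interior_polar:
  fixes P :: "(real^'n) set"
  assumes "bounded P"
  shows "0 \<in> interior (polar P)"
proof -
  obtain R where R: "R > 0" "\<And>u. u \<in> P \<Longrightarrow> norm u \<le> R"
    using assms bounded_pos by blast
  have "ball 0 (1/R) \<subseteq> polar P"
  proof
    fix v assume v: "v \<in> ball (0::real^'n) (1/R)"
    have "u \<bullet> v \<ge> -1" if "u \<in> P" for u
    proof -
      have "\<bar>u \<bullet> v\<bar> \<le> norm u * norm v" by (rule Cauchy_Schwarz_ineq2)
      also have "\<dots> \<le> R * (1/R)"
        using R that v by (intro mult_mono) auto
      finally show ?thesis using R by simp
    qed
    then show "v \<in> polar P" by (auto simp: polar_def)
  qed
  then show ?thesis using R by (meson centre_in_ball interior_maximal open_ball subsetD zero_less_divide_1_iff)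
qed

lemma compact_polar:
  fixes P :: "(real^'n) set"
  assumes "0 \<in> interior P"
  shows "compact (polar P)"
  using bounded_polar[OF assms] closed_polar by (simp add: compact_eq_bounded_closed)

lemma bipolar:
  fixes P :: "(real^'n) set"
  assumes "convex P" "closed P" "0 \<in> P"
  shows "polar (polar P) = P"
proof
  show "P \<subseteq> polar (polar P)"
    by (auto simp: polar_def inner_commute)
  show "polar (polar P) \<subseteq> P"
  proof
    fix z assume z: "z \<in> polar (polar P)"
    show "z \<in> P"
    proof (rule ccontr)
      assume "z \<notin> P"
      then obtain a b where ab: "a \<bullet> z < b" "\<forall>x\<in>P. a \<bullet> x > b"
        using separating_hyperplane_closed_point[OF assms(1,2)] by blast
      have b0: "b < 0" using ab(2) assms(3) by force
      define v where "v = (1 / (- b)) *\<^sub>R a"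
      have "v \<in> polar P"
      proof -
        have "x \<bullet> v \<ge> -1" if "x \<in> P" for x
        proof -
          have "x \<bullet> v = (a \<bullet> x) / (-b)" by (simp add: v_def inner_commute)
          also have "\<dots> \<ge> b / (-b)" using ab(2) that b0 by (intro divide_right_mono) auto
          finally show ?thesis using b0 by simp
        qed
        then show ?thesis by (auto simp: polar_def)
      qed
      then have "v \<bullet> z \<ge> -1" using z polar_ge by blast
      moreover have "v \<bullet> z = (a \<bullet> z) / (-b)" by (simp add: v_def)
      moreover have "(a \<bullet> z) / (-b) < b / (-b)" using ab(1) b0 by (intro divide_strict_right_mono) auto
      ultimately show False using b0 by simp
    qed
  qed
qed

lemma proper_face_frontier:
  assumes F: "F \<in> proper_faces S" shows "F \<subseteq> frontier S"
proof
  fix x assume x: "x \<in> F"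
  have f: "F face_of S" and n: "F \<noteq> S" using F unfolding proper_faces_def by simp_all
  have 1: "F \<inter> interior S = {}" by (rule face_of_disjoint_interior[OF f n])
  have 2: "F \<subseteq> S" by (rule face_of_imp_subset[OF f])
  have "x \<in> closure S" using 2 x closure_subset by blast
  moreover have "x \<notin> interior S" using 1 x by blast
  ultimately show "x \<in> frontier S" unfolding frontier_def by blast
qed

lemma exposed_proper_face:
  fixes P :: "(real^'n) set"
  assumes "convex P" "0 \<in> P" "y \<in> polar P" "x \<in> P" "x \<bullet> y = -1"
  shows "{x \<in> P. x \<bullet> y = -1} \<in> proper_faces P"
proof -
  have "P \<inter> {x. y \<bullet> x = -1} face_of P"
    by (rule face_of_Int_supporting_hyperplane_ge) (use assms in \<open>auto simp: polar_def inner_commute\<close>)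
  moreover have "P \<inter> {x. y \<bullet> x = -1} = {x \<in> P. x \<bullet> y = -1}" by (auto simp: inner_commute)
  moreover have "{x \<in> P. x \<bullet> y = -1} \<noteq> {}" using assms by auto
  moreover have "{x \<in> P. x \<bullet> y = -1} \<noteq> P"
  proof
    assume "{x \<in> P. x \<bullet> y = -1} = P"
    then have "0 \<in> {x \<in> P. x \<bullet> y = -1}" using assms(2) by simp
    then show False by simp
  qed
  ultimately show ?thesis unfolding proper_faces_def by simp
qed
lemma frontier_polar_touch:
  fixes P :: "(real^'n) set"
  assumes "compact P" "P \<noteq> {}" "y \<in> frontier (polar P)"
  shows "\<exists>x\<in>P. x \<bullet> y \<le> -1"
proof (rule ccontr)
  assume "\<not> ?thesis"
  then have gt: "\<forall>x\<in>P. x \<bullet> y > -1" by force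
  obtain x0 where x0: "x0 \<in> P" "\<forall>x\<in>P. x0 \<bullet> y \<le> x \<bullet> y"
  proof -
    have "continuous_on P (\<lambda>x. x \<bullet> y)" by (intro continuous_intros)
    then show ?thesis using continuous_attains_inf[OF assms(1,2)] that by blast
  qed
  define m where "m = x0 \<bullet> y"
  have m: "m > -1" using gt x0 m_def by auto
  obtain R where R: "R > 0" "\<And>u. u \<in> P \<Longrightarrow> norm u \<le> R"
    using assms compact_imp_bounded bounded_pos by metis
  have "ball y ((m+1)/R) \<subseteq> polar P"
  proof
    fix y' assume y': "y' \<in> ball y ((m+1)/R)"
    have "x \<bullet> y' \<ge> -1" if "x \<in> P" for x
    proof -
      have "\<bar>x \<bullet> (y' - y)\<bar> \<le> norm x * norm (y' - y)" by (rule Cauchy_Schwarz_ineq2)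
      also have "\<dots> \<le> R * ((m+1)/R)"
        using R that y' by (intro mult_mono) (auto simp: dist_norm norm_minus_commute)
      also have "\<dots> = m + 1" using R by simp
      finally have "x \<bullet> y' \<ge> x \<bullet> y - (m+1)" by (simp add: inner_diff_right)
      moreover have "x \<bullet> y \<ge> m" using x0 that m_def by auto
      ultimately show ?thesis by linarith
    qed
    then show "y' \<in> polar P" by (auto simp: polar_def)
  qed
  then have "y \<in> interior (polar P)"
  proof -
    have "(m+1)/R > 0" using m R by simp
    then show ?thesis using \<open>ball y ((m+1)/R) \<subseteq> polar P\<close>
      by (meson centre_in_ball interior_maximal open_ball subsetD)
  qed
  then show False using assms(3) by (simp add: frontier_def)
qed

lemma frontier_touch:
  fixes P :: "(real^'n) set"
  assumes "convex P" "0 \<in> interior P" "x \<in> frontier P"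
  shows "\<exists>y\<in>polar P. x \<bullet> y = -1"
proof -
  have ne: "interior P \<noteq> {}" using assms by auto
  have "x \<in> closure P" "x \<notin> rel_interior P"
    using assms(3) ne by (auto simp: frontier_def rel_interior_nonempty_interior)
  then obtain a where a: "a \<noteq> 0" "\<And>y. y \<in> closure P \<Longrightarrow> a \<bullet> x \<le> a \<bullet> y"
    using supporting_hyperplane_relative_frontier[OF assms(1)] by metis
  obtain e where e: "e > 0" "ball 0 e \<subseteq> P"
    using assms mem_interior by blast
  define u where "u = (- (e/2) / norm a) *\<^sub>R a"
  have "norm u = e/2" using a e by (simp add: u_def)
  then have "u \<in> P" using e by auto
  then have "a \<bullet> x \<le> a \<bullet> u" using a closure_subset by blast
  also have "a \<bullet> u = - (e/2) * norm a"
    using a by (simp add: u_def dot_square_norm power2_eq_square)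
  finally have axu: "a \<bullet> x \<le> - (e/2) * norm a" .
  have "(e/2) * norm a > 0" using a e by simp
  then have ax: "a \<bullet> x < 0" using axu by linarith
  define y where "y = (1 / (- (a \<bullet> x))) *\<^sub>R a"
  have "y \<in> polar P"
  proof -
    have "z \<bullet> y \<ge> -1" if "z \<in> P" for z
    proof -
      have "z \<bullet> y = (a \<bullet> z) / (-(a \<bullet> x))" by (simp add: y_def inner_commute)
      also have "\<dots> \<ge> (a \<bullet> x) / (-(a \<bullet> x))"
        using a(2)[of z] that closure_subset ax by (intro divide_right_mono) auto
      finally show ?thesis using ax by simp
    qed
    then show ?thesis by (auto simp: polar_def)
  qed
  moreover have "x \<bullet> y = -1" using ax by (simp add: y_def inner_commute)
  ultimately show ?thesis by blast
qed

lemma face_exposed_polar: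
  fixes P :: "(real^'n) set"
  assumes "polyhedron P" "0 \<in> interior P" "G \<in> proper_faces P"
  shows "\<exists>y\<in>polar P. G = {x \<in> P. x \<bullet> y = -1}"
proof -
  have G: "G face_of P" "G \<noteq> {}" "G \<noteq> P" using assms(3) by (auto simp: proper_faces_def)
  then have "G exposed_face_of P" using exposed_face_of_polyhedron[OF assms(1)] by blast
  then obtain a b where ab: "P \<subseteq> {x. a \<bullet> x \<le> b}" "G = P \<inter> {x. a \<bullet> x = b}"
    unfolding exposed_face_of_def by blast
  have "0 \<in> P" using assms(2) interior_subset by blast
  then have b0: "b \<ge> 0" using ab by auto
  have "0 \<notin> G" using face_of_disjoint_interior[OF G(1) G(3)] assms(2) by blast
  then have bne: "b \<noteq> 0" using ab \<open>0 \<in> P\<close> by auto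
  with b0 have b: "b > 0" by simp
  define y where "y = (- 1 / b) *\<^sub>R a"
  have xy: "x \<bullet> y = - (a \<bullet> x) / b" for x by (simp add: y_def inner_commute)
  have "y \<in> polar P"
  proof -
    have "x \<bullet> y \<ge> -1" if "x \<in> P" for x
      using ab(1) that b by (auto simp: xy field_simps)
    then show ?thesis by (auto simp: polar_def)
  qed
  moreover have "G = {x \<in> P. x \<bullet> y = -1}"
    using ab(2) b by (auto simp: xy field_simps)
  ultimately show ?thesis by blast
qed

lemma polar_convex_hull:
  fixes V :: "(real^'n) set"
  shows "polar (convex hull V) = (\<Inter>v\<in>V. {y. v \<bullet> y \<ge> -1})"
proof
  show "polar (convex hull V) \<subseteq> (\<Inter>v\<in>V. {y. v \<bullet> y \<ge> -1})"
    by (auto simp: polar_def hull_inc)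
  show "(\<Inter>v\<in>V. {y. v \<bullet> y \<ge> -1}) \<subseteq> polar (convex hull V)"
  proof
    fix y assume y: "y \<in> (\<Inter>v\<in>V. {y. v \<bullet> y \<ge> -1})"
    have "convex hull V \<subseteq> {x. x \<bullet> y \<ge> -1}"
    proof (rule hull_minimal)
      show "V \<subseteq> {x. x \<bullet> y \<ge> -1}" using y by (auto simp: inner_commute)
      have "{x. x \<bullet> y \<ge> -1} = {x. y \<bullet> x \<ge> -1}" by (auto simp: inner_commute)
      then show "convex {x. x \<bullet> y \<ge> -1}" using convex_halfspace_ge by metis
    qed
    then show "y \<in> polar (convex hull V)" by (auto simp: polar_def)
  qed
qed

lemma polyhedron_polar:
  fixes P :: "(real^'n) set"
  assumes "polytope P"
  shows "polyhedron (polar P)"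
proof -
  obtain V where V: "finite V" "P = convex hull V" using assms polytope_def by blast
  have "polar P = \<Inter>((\<lambda>v. {y. v \<bullet> y \<ge> -1}) ` V)" using V polar_convex_hull by simp
  also have "polyhedron \<dots>"
    using V by (intro polyhedron_Inter) (auto intro: polyhedron_halfspace_ge)
  finally show ?thesis .
qed

lemma dual_face_Inter:
  assumes "G \<noteq> {}"
  shows "dual_face P G = \<Inter>((\<lambda>u. polar P \<inter> {v. u \<bullet> v = -1}) ` G)"
  using assms by (auto simp: dual_face_def)

lemma dual_face_props:
  fixes P :: "(real^'n) set"
  assumes P: "polytope P" "0 \<in> interior P" and G: "G \<in> proper_faces P"
  shows "dual_face P G \<in> proper_faces (polar P)"
    and "{x \<in> P. \<forall>v\<in>dual_face P G. x \<bullet> v = -1} = G"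
proof -
  obtain y where y: "y \<in> polar P" "G = {x \<in> P. x \<bullet> y = -1}"
    using face_exposed_polar[OF polytope_imp_polyhedron[OF P(1)] P(2) G] by blast
  have yd: "y \<in> dual_face P G" using y by (auto simp: dual_face_def)
  have Gf: "G face_of P" and Gne: "G \<noteq> {}" using G unfolding proper_faces_def by simp_all
  have GP: "G \<subseteq> P" using face_of_imp_subset[OF Gf] .
  show "{x \<in> P. \<forall>v\<in>dual_face P G. x \<bullet> v = -1} = G"
  proof
    show "{x \<in> P. \<forall>v\<in>dual_face P G. x \<bullet> v = -1} \<subseteq> G" using yd y(2) by blast
    show "G \<subseteq> {x \<in> P. \<forall>v\<in>dual_face P G. x \<bullet> v = -1}" using GP by (auto simp: dual_face_def)
  qed
  have faces: "polar P \<inter> {v. u \<bullet> v = -1} face_of polar P" if "u \<in> G" for u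
  proof -
    have "u \<in> P" using that GP by blast
    then have "\<And>v. v \<in> polar P \<Longrightarrow> u \<bullet> v \<ge> -1" using polar_ge by blast
    then show ?thesis by (rule face_of_Int_supporting_hyperplane_ge[OF convex_polar])
  qed
  have "dual_face P G face_of polar P"
    unfolding dual_face_Inter[OF Gne]
  proof (rule face_of_Inter)
    show "(\<lambda>u. polar P \<inter> {v. u \<bullet> v = -1}) ` G \<noteq> {}" using Gne by simp
    show "\<And>T. T \<in> (\<lambda>u. polar P \<inter> {v. u \<bullet> v = -1}) ` G \<Longrightarrow> T face_of polar P"
      using faces by blast
  qed
  moreover have "dual_face P G \<noteq> {}" using yd by blast
  moreover have "dual_face P G \<noteq> polar P"
  proof
    assume "dual_face P G = polar P"
    moreover have "0 \<in> polar P" by (simp add: polar_def)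
    ultimately have "0 \<in> dual_face P G" by simp
    then show False using Gne by (auto simp: dual_face_def)
  qed
  ultimately show "dual_face P G \<in> proper_faces (polar P)" by (simp add: proper_faces_def)
qed

lemma dual_face_inj:
  fixes P :: "(real^'n) set"
  assumes P: "polytope P" "0 \<in> interior P" and "G \<in> proper_faces P" "G' \<in> proper_faces P"
    and "dual_face P G = dual_face P G'"
  shows "G = G'"
proof -
  have "G = {x \<in> P. \<forall>v\<in>dual_face P G. x \<bullet> v = -1}" using dual_face_props(2)[OF P assms(3)] by simp
  also have "\<dots> = {x \<in> P. \<forall>v\<in>dual_face P G'. x \<bullet> v = -1}" using assms(5) by simp
  also have "\<dots> = G'" using dual_face_props(2)[OF P assms(4)] by simp
  finally show ?thesis .
qed

lemma dual_face_surj: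
  fixes P :: "(real^'n) set"
  assumes P: "polytope P" "0 \<in> interior P" and H: "H \<in> proper_faces (polar P)"
  shows "\<exists>G\<in>proper_faces P. dual_face P G = H"
proof -
  have H1: "H face_of polar P" and H2: "H \<noteq> {}" and H3: "H \<noteq> polar P"
    using H by (simp_all add: proper_faces_def)
  have "H exposed_face_of polar P"
    using exposed_face_of_polyhedron[OF polyhedron_polar[OF P(1)]] H1 by simp
  then obtain a b where ab: "polar P \<subseteq> {x. a \<bullet> x \<le> b}" "H = polar P \<inter> {x. a \<bullet> x = b}"
    unfolding exposed_face_of_def by blast
  have z: "0 \<in> interior (polar P)" by (rule zero_interior_polar[OF polytope_imp_bounded[OF P(1)]])
  then have z0: "0 \<in> polar P" using interior_subset by blast
  then have b0: "b \<ge> 0" using ab by auto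
  have "H \<inter> interior (polar P) = {}" by (rule face_of_disjoint_interior[OF H1 H3])
  then have "0 \<notin> H" using z by blast
  then have "b \<noteq> 0" using ab z0 by auto
  with b0 have b: "b > 0" by simp
  define x0 where "x0 = (- 1 / b) *\<^sub>R a"
  have vx: "v \<bullet> x0 = - (a \<bullet> v) / b" "x0 \<bullet> v = - (a \<bullet> v) / b" for v
    by (simp_all add: x0_def inner_commute)
  have "x0 \<in> polar (polar P)"
  proof -
    have "v \<bullet> x0 \<ge> -1" if "v \<in> polar P" for v
      using ab(1) that b by (auto simp: vx field_simps)
    then show ?thesis by (auto simp: polar_def)
  qed
  moreover have "polar (polar P) = P"
    using P interior_subset by (intro bipolar) (auto simp: polytope_imp_convex polytope_imp_closed)
  ultimately have x0P: "x0 \<in> P" by simp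
  define G where "G = {x \<in> P. \<forall>v\<in>H. x \<bullet> v = -1}"
  have x0G: "x0 \<in> G" using x0P ab(2) b by (auto simp: G_def vx)
  have GI: "G = \<Inter>((\<lambda>v. P \<inter> {x. v \<bullet> x = -1}) ` H)"
    using H2 by (auto simp: G_def inner_commute)
  have HP: "H \<subseteq> polar P" using face_of_imp_subset[OF H1] .
  have faces: "P \<inter> {x. v \<bullet> x = -1} face_of P" if "v \<in> H" for v
  proof -
    have "v \<in> polar P" using that HP by blast
    then have "\<And>x. x \<in> P \<Longrightarrow> v \<bullet> x \<ge> -1" using polar_ge inner_commute by metis
    then show ?thesis by (rule face_of_Int_supporting_hyperplane_ge[OF polytope_imp_convex[OF P(1)]])
  qed
  have "G face_of P" unfolding GI
  proof (rule face_of_Inter)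
    show "(\<lambda>v. P \<inter> {x. v \<bullet> x = -1}) ` H \<noteq> {}" using H2 by simp
    show "\<And>T. T \<in> (\<lambda>v. P \<inter> {x. v \<bullet> x = -1}) ` H \<Longrightarrow> T face_of P"
      using faces by blast
  qed
  moreover have "G \<noteq> {}" using x0G by blast
  moreover have "G \<noteq> P"
  proof
    assume "G = P"
    moreover have "0 \<in> P" using P(2) interior_subset by blast
    ultimately have "0 \<in> G" by simp
    then show False using H2 by (auto simp: G_def)
  qed
  ultimately have Gp: "G \<in> proper_faces P" by (simp add: proper_faces_def)
  have "dual_face P G = H"
  proof
    show "dual_face P G \<subseteq> H"
    proof
      fix v assume v: "v \<in> dual_face P G"
      then have "v \<in> polar P" "x0 \<bullet> v = -1" using x0G by (auto simp: dual_face_def)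
      then show "v \<in> H" using ab(2) b by (auto simp: vx field_simps)
    qed
    show "H \<subseteq> dual_face P G" using HP by (auto simp: dual_face_def G_def)
  qed
  with Gp show ?thesis by blast
qed

lemma dual_map_eq:
  fixes P :: "(real^'n) set"
  assumes P: "polytope P" "0 \<in> interior P" and G: "G \<in> proper_faces P"
  shows "dual_map P Q \<psi> (dual_face P G) = dual_face Q (\<psi> G)"
proof -
  have "(THE G'. G' \<in> proper_faces P \<and> dual_face P G' = dual_face P G) = G"
  proof (rule the_equality)
    show "G \<in> proper_faces P \<and> dual_face P G = dual_face P G" using G by simp
    show "\<And>G'. G' \<in> proper_faces P \<and> dual_face P G' = dual_face P G \<Longrightarrow> G' = G"
      using dual_face_inj[OF P _ G] by blast
  qed
  then show ?thesis by (simp add: dual_map_def)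
qed

lemma selection:
  fixes D :: "'a::metric_space set" and c :: "'i \<Rightarrow> 'b::real_normed_vector"
  assumes I: "finite I" and B: "\<And>i. i \<in> I \<Longrightarrow> closed (B i)"
    and cov: "\<And>x. x \<in> D \<Longrightarrow> \<exists>i\<in>I. x \<notin> B i"
    and T: "\<And>x. x \<in> D \<Longrightarrow> convex (T x)"
    and c: "\<And>x i. x \<in> D \<Longrightarrow> i \<in> I \<Longrightarrow> x \<notin> B i \<Longrightarrow> c i \<in> T x"
  shows "\<exists>g. continuous_on D g \<and> (\<forall>x\<in>D. g x \<in> T x)"
proof -
  define w where "w i x = (if B i = {} then 1 else infdist x (B i))" for i x
  have w0: "w i x \<ge> 0" for i x by (simp add: w_def infdist_nonneg)
  have wpos: "x \<notin> B i" if "w i x > 0" for i x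
  proof
    assume "x \<in> B i"
    then have "w i x = 0" by (auto simp: w_def)
    with that show False by simp
  qed
  have wpos2: "w i x > 0" if "i \<in> I" "x \<notin> B i" for i x
  proof (cases "B i = {}")
    case False
    then show ?thesis using infdist_pos_not_in_closed[OF B[OF that(1)] False that(2)] by (simp add: w_def)
  qed (simp add: w_def)
  define W where "W x = (\<Sum>i\<in>I. w i x)" for x
  have Wpos: "W x > 0" if xD: "x \<in> D" for x
  proof -
    obtain i where "i \<in> I" "x \<notin> B i" using cov[OF xD] by blast
    then show ?thesis unfolding W_def by (intro sum_pos2[OF I]) (use wpos2 w0 in auto)
  qed
  have wcont: "continuous_on D (w i)" for i
  proof (cases "B i = {}")
    case True
    then show ?thesis by (simp add: w_def continuous_on_const)
  next
    case False
    then show ?thesis unfolding w_def by (simp add: continuous_on_infdist continuous_on_id)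
  qed
  define g where "g x = (\<Sum>i\<in>I. (w i x / W x) *\<^sub>R c i)" for x
  have "continuous_on D g"
    unfolding g_def W_def
    by (intro continuous_intros wcont) (use Wpos W_def in \<open>auto simp: less_le\<close>)
  moreover have "g x \<in> T x" if x: "x \<in> D" for x
  proof -
    define S where "S = {i \<in> I. w i x > 0}"
    have SI: "S \<subseteq> I" and fS: "finite S" using I by (auto simp: S_def)
    have z: "\<forall>i\<in>I - S. w i x = 0" using w0 by (auto simp: S_def less_le)
    have "g x = (\<Sum>i\<in>S. (w i x / W x) *\<^sub>R c i)"
      unfolding g_def by (rule sum.mono_neutral_right[OF I SI]) (use z in auto)
    moreover have "(\<Sum>i\<in>S. w i x / W x) = 1"
    proof -
      have "(\<Sum>i\<in>S. w i x / W x) = (\<Sum>i\<in>I. w i x / W x)"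
        by (rule sum.mono_neutral_left[OF I SI]) (use z in auto)
      also have "\<dots> = W x / W x" unfolding W_def by (simp only: sum_divide_distrib)
      also have "\<dots> = 1" using Wpos[OF x] by simp
      finally show ?thesis .
    qed
    moreover have "(\<Sum>i\<in>S. (w i x / W x) *\<^sub>R c i) \<in> T x"
    proof (rule convex_sum[OF fS T[OF x]])
      show "(\<Sum>i\<in>S. w i x / W x) = 1" by fact
      show "\<And>i. i \<in> S \<Longrightarrow> 0 \<le> w i x / W x" using w0 Wpos[OF x] by simp
      show "\<And>i. i \<in> S \<Longrightarrow> c i \<in> T x" using c[OF x] wpos SI by (auto simp: S_def)
    qed
    ultimately show ?thesis by simp
  qed
  ultimately show ?thesis by blast
qed

lemma dual_face_anti: "A \<subseteq> B \<Longrightarrow> dual_face Q B \<subseteq> dual_face Q A"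
  by (auto simp: dual_face_def)

lemma proper_faces_finite:
  fixes P :: "(real^'n) set"
  assumes "polytope P" shows "finite (proper_faces P)"
proof -
  have "proper_faces P \<subseteq> {F. F face_of P}" by (auto simp: proper_faces_def)
  then show ?thesis using finite_polytope_faces[OF assms] finite_subset by blast
qed

lemma proper_face_props:
  assumes "G \<in> proper_faces P"
  shows "G face_of P" "G \<noteq> {}" "G \<noteq> P" "G \<subseteq> P" "convex G"
  using assms face_of_imp_subset face_of_imp_convex by (auto simp: proper_faces_def)

lemma frontier_in_proper_face:
  fixes P :: "(real^'n) set"
  assumes P: "polytope P" "0 \<in> interior P" and x: "x \<in> frontier P"
  shows "\<exists>y\<in>polar P. x \<bullet> y = -1 \<and> {x' \<in> P. x' \<bullet> y = -1} \<in> proper_faces P \<and> x \<in> {x' \<in> P. x' \<bullet> y = -1}"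
proof -
  obtain y where y: "y \<in> polar P" "x \<bullet> y = -1"
    using frontier_touch[OF polytope_imp_convex[OF P(1)] P(2) x] by blast
  have "closed P" using P(1) polytope_imp_closed by blast
  then have xP: "x \<in> P" using x by (simp add: frontier_def)
  have "0 \<in> P" using P(2) interior_subset by blast
  then have "{x' \<in> P. x' \<bullet> y = -1} \<in> proper_faces P"
    using exposed_proper_face[OF polytope_imp_convex[OF P(1)] _ y(1) xP y(2)] by blast
  then show ?thesis using y xP by blast
qed

lemma frontier_polar_proper_face:
  fixes P :: "(real^'n) set"
  assumes P: "polytope P" "0 \<in> interior P" and y: "y \<in> frontier (polar P)"
  shows "{x \<in> P. x \<bullet> y = -1} \<in> proper_faces P" "y \<in> polar P"
proof -
  have yP: "y \<in> polar P" using y closed_polar[of P] by (simp add: frontier_def closure_closed)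
  have "P \<noteq> {}" using P(2) interior_subset by blast
  then obtain x where x: "x \<in> P" "x \<bullet> y \<le> -1"
    using frontier_polar_touch[OF polytope_imp_compact[OF P(1)] _ y] by blast
  then have "x \<bullet> y = -1" using polar_ge[OF x(1) yP] by simp
  moreover have "0 \<in> P" using P(2) interior_subset by blast
  ultimately show "{x \<in> P. x \<bullet> y = -1} \<in> proper_faces P"
    using exposed_proper_face[OF polytope_imp_convex[OF P(1)] _ yP x(1)] by blast
  show "y \<in> polar P" by (rule yP)
qed

lemma char_exists:
  fixes P Q :: "(real^'n) set"
  assumes P: "polytope P" "0 \<in> interior P" and Q: "polytope Q" "0 \<in> interior Q"
    and op: "order_preserving_faces P Q \<psi>"
  shows "\<exists>f. characteristic_map P Q \<psi> f"
proof -
  have op1: "\<And>G. G \<in> proper_faces P \<Longrightarrow> \<psi> G \<in> proper_faces Q"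
    and op2: "\<And>G H. G \<in> proper_faces P \<Longrightarrow> H \<in> proper_faces P \<Longrightarrow> G \<subseteq> H \<Longrightarrow> \<psi> G \<subseteq> \<psi> H"
    using op unfolding order_preserving_faces_def by blast+
  have cP: "convex P" "closed P" using P(1) polytope_imp_convex polytope_imp_closed by blast+
  define I where "I = proper_faces P"
  define B where "B H = \<Union>{G \<in> proper_faces P. \<not> H \<subseteq> G}" for H
  define c where "c H = (SOME z. z \<in> \<psi> H)" for H
  define T where "T x = \<Inter>(\<psi> ` {G \<in> proper_faces P. x \<in> G})" for x
  have finI: "finite I" unfolding I_def by (rule proper_faces_finite[OF P(1)])
  have "closed (B H)" for H
    unfolding B_def
  proof (rule closed_Union)
    show "finite {G \<in> proper_faces P. \<not> H \<subseteq> G}" using finI I_def by simp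
    show "\<forall>T\<in>{G \<in> proper_faces P. \<not> H \<subseteq> G}. closed T"
      using face_of_imp_closed[OF cP] proper_face_props(1) by blast
  qed
  moreover have cov: "\<exists>H\<in>I. x \<notin> B H" if x: "x \<in> frontier P" for x
  proof -
    obtain y where y: "{x' \<in> P. x' \<bullet> y = -1} \<in> proper_faces P" "x \<in> {x' \<in> P. x' \<bullet> y = -1}"
      using frontier_in_proper_face[OF P x] by blast
    define M where "M = \<Inter>{G \<in> proper_faces P. x \<in> G}"
    have "M face_of P" unfolding M_def
    proof (rule face_of_Inter)
      show "{G \<in> proper_faces P. x \<in> G} \<noteq> {}" using y by blast
      show "\<And>T. T \<in> {G \<in> proper_faces P. x \<in> G} \<Longrightarrow> T face_of P" using proper_face_props(1) by blast
    qed
    moreover have "x \<in> M" by (auto simp: M_def)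
    moreover have "M \<noteq> P"
    proof
      assume "M = P"
      then have "P \<subseteq> {x' \<in> P. x' \<bullet> y = -1}" using y unfolding M_def by blast
      then have "{x' \<in> P. x' \<bullet> y = -1} = P" by blast
      then show False using y(1) proper_face_props(3) by blast
    qed
    ultimately have "M \<in> I" unfolding I_def proper_faces_def by blast
    moreover have "x \<notin> B M" unfolding B_def M_def by blast
    ultimately show ?thesis by blast
  qed
  moreover have "convex (T x)" for x
    unfolding T_def by (rule convex_Inter) (use op1 proper_face_props(5) in blast)
  moreover have "c H \<in> T x" if "x \<in> frontier P" "H \<in> I" "x \<notin> B H" for x H
  proof -
    have "\<psi> H \<noteq> {}" using op1 that(2) proper_face_props(2) I_def by blast
    then have cH: "c H \<in> \<psi> H" unfolding c_def by (simp add: some_in_eq)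
    have "c H \<in> \<psi> G" if G: "G \<in> proper_faces P" "x \<in> G" for G
    proof -
      have "H \<subseteq> G" using G \<open>x \<notin> B H\<close> unfolding B_def by blast
      then show ?thesis using op2[OF _ G(1)] \<open>H \<in> I\<close> cH I_def by blast
    qed
    then show ?thesis unfolding T_def by blast
  qed
  ultimately obtain f where f: "continuous_on (frontier P) f" "\<forall>x\<in>frontier P. f x \<in> T x"
    using selection[OF finI, of B "frontier P" T c] by blast
  have "f x \<in> frontier Q" if x: "x \<in> frontier P" for x
  proof -
    obtain y where y: "{x' \<in> P. x' \<bullet> y = -1} \<in> proper_faces P" "x \<in> {x' \<in> P. x' \<bullet> y = -1}"
      using frontier_in_proper_face[OF P x] by blast
    then have "f x \<in> \<psi> {x' \<in> P. x' \<bullet> y = -1}" using f(2) x unfolding T_def by blast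
    then show ?thesis using proper_face_frontier[OF op1[OF y(1)]] by blast
  qed
  moreover have "f ` G \<subseteq> \<psi> G" if G: "G \<in> proper_faces P" for G
  proof
    fix z assume "z \<in> f ` G"
    then obtain x where x: "x \<in> G" "z = f x" by blast
    then have "x \<in> frontier P" using proper_face_frontier[OF G] by blast
    then show "z \<in> \<psi> G" using f(2) x G unfolding T_def by blast
  qed
  ultimately have "characteristic_map P Q \<psi> f"
    unfolding characteristic_map_def using f(1) by auto
  then show ?thesis by blast
qed

lemma char_exists_dual:
  fixes P Q :: "(real^'n) set"
  assumes P: "polytope P" "0 \<in> interior P" and Q: "polytope Q" "0 \<in> interior Q"
    and op: "order_preserving_faces P Q \<psi>"
  shows "\<exists>g. characteristic_map (polar P) (polar Q) (dual_map P Q \<psi>) g"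
proof -
  have op1: "\<And>G. G \<in> proper_faces P \<Longrightarrow> \<psi> G \<in> proper_faces Q"
    and op2: "\<And>G H. G \<in> proper_faces P \<Longrightarrow> H \<in> proper_faces P \<Longrightarrow> G \<subseteq> H \<Longrightarrow> \<psi> G \<subseteq> \<psi> H"
    using op unfolding order_preserving_faces_def by blast+
  obtain V where V: "finite V" "P = convex hull V" using P(1) unfolding polytope_def by auto
  have VP: "V \<subseteq> P" unfolding V(2) by (rule hull_subset)
  define Gy where "Gy y = {x \<in> P. x \<bullet> y = -1}" for y
  define I where "I = proper_faces P"
  define B where "B H = frontier (polar P) \<inter> (\<Union>v\<in>V - H. {y. v \<bullet> y = -1})" for H
  define c where "c H = (SOME z. z \<in> dual_face Q (\<psi> H))" for H
  define T where "T y = dual_face Q (\<psi> (Gy y))" for y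
  have finI: "finite I" unfolding I_def by (rule proper_faces_finite[OF P(1)])
  have Gy: "Gy y \<in> proper_faces P" if "y \<in> frontier (polar P)" for y
    unfolding Gy_def by (rule frontier_polar_proper_face(1)[OF P that])
  have TF: "T y \<in> proper_faces (polar Q)" if "y \<in> frontier (polar P)" for y
    unfolding T_def by (rule dual_face_props(1)[OF Q op1[OF Gy[OF that]]])
  have "closed (B H)" for H
    unfolding B_def
  proof (rule closed_Int)
    show "closed (frontier (polar P))" by simp
    show "closed (\<Union>v\<in>V - H. {y. v \<bullet> y = -1})"
      using V(1) by (simp add: closed_UN closed_hyperplane)
  qed
  moreover have cov: "\<exists>H\<in>I. y \<notin> B H" if y: "y \<in> frontier (polar P)" for y
  proof -
    have "y \<notin> B (Gy y)"
    proof
      assume "y \<in> B (Gy y)"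
      then obtain v where v: "v \<in> V" "v \<notin> Gy y" "v \<bullet> y = -1" unfolding B_def by blast
      then have "v \<in> P" using VP by blast
      then show False using v unfolding Gy_def by blast
    qed
    then show ?thesis using Gy[OF y] I_def by blast
  qed
  moreover have "convex (T y)" if "y \<in> frontier (polar P)" for y
    using TF[OF that] proper_face_props(5) by blast
  moreover have "c H \<in> T y" if y: "y \<in> frontier (polar P)" and H: "H \<in> I" "y \<notin> B H" for y H
  proof -
    have "dual_face Q (\<psi> H) \<noteq> {}"
      using dual_face_props(1)[OF Q op1[of H]] H(1) I_def proper_face_props(2) by blast
    then have cH: "c H \<in> dual_face Q (\<psi> H)" unfolding c_def by (simp add: some_in_eq)
    have "Gy y face_of P" by (rule proper_face_props(1)[OF Gy[OF y]])
    then have "Gy y face_of convex hull V" using V(2) by simp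
    then obtain S' where S': "S' \<subseteq> V" "Gy y = convex hull S'"
      using face_of_convex_hull_subset[OF finite_imp_compact[OF V(1)]] by metis
    have "S' \<subseteq> H"
    proof
      fix v assume v: "v \<in> S'"
      then have "v \<in> convex hull S'" by (rule hull_inc)
      then have "v \<in> Gy y" using S'(2) by simp
      then have "v \<bullet> y = -1" unfolding Gy_def by blast
      then show "v \<in> H" using H(2) y v S'(1) unfolding B_def by blast
    qed
    then have "Gy y \<subseteq> H" using S'(2) proper_face_props(5)[of H P] H(1) I_def
      by (metis hull_minimal)
    then have "\<psi> (Gy y) \<subseteq> \<psi> H" using op2[OF Gy[OF y]] H(1) I_def by blast
    then show ?thesis unfolding T_def using dual_face_anti cH by blast
  qed
  ultimately obtain g where g: "continuous_on (frontier (polar P)) g" "\<forall>y\<in>frontier (polar P). g y \<in> T y"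
    using selection[OF finI, of B "frontier (polar P)" T c] by blast
  have "g y \<in> frontier (polar Q)" if y: "y \<in> frontier (polar P)" for y
    using g(2) y proper_face_frontier[OF TF[OF y]] by blast
  moreover have "g ` H' \<subseteq> dual_map P Q \<psi> H'" if H': "H' \<in> proper_faces (polar P)" for H'
  proof
    obtain G where G: "G \<in> proper_faces P" "dual_face P G = H'"
      using dual_face_surj[OF P H'] by blast
    have dm: "dual_map P Q \<psi> H' = dual_face Q (\<psi> G)"
      using dual_map_eq[OF P G(1)] G(2) by simp
    fix z assume "z \<in> g ` H'"
    then obtain y where y: "y \<in> H'" "z = g y" by blast
    have yf: "y \<in> frontier (polar P)" using proper_face_frontier[OF H'] y(1) by blast
    have "G \<subseteq> Gy y" using G y(1) proper_face_props(4)[OF G(1)] unfolding Gy_def dual_face_def by blast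
    then have "\<psi> G \<subseteq> \<psi> (Gy y)" using op2[OF G(1) Gy[OF yf]] by blast
    then have "T y \<subseteq> dual_face Q (\<psi> G)" unfolding T_def by (rule dual_face_anti)
    then show "z \<in> dual_map P Q \<psi> H'" using g(2) yf y(2) dm by blast
  qed
  ultimately have "characteristic_map (polar P) (polar Q) (dual_map P Q \<psi>) g"
    unfolding characteristic_map_def using g(1) by auto
  then show ?thesis by blast
qed

lemma scale_closure_interior:
  fixes K :: "(real^'n) set"
  assumes "convex K" "0 \<in> interior K" "z \<in> closure K" "0 < t" "t < 1"
  shows "t *\<^sub>R z \<in> interior K"
proof (cases "z = 0")
  case True
  then show ?thesis using assms by simp
next
  case False
  have ne: "interior K \<noteq> {}" using assms by blast
  have "open_segment 0 z \<subseteq> rel_interior K"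
    by (rule rel_interior_closure_convex_segment) (use assms ne in \<open>auto simp: rel_interior_nonempty_interior\<close>)
  moreover have "t *\<^sub>R z \<in> open_segment 0 z"
    unfolding in_segment using False assms(4,5) by (intro conjI exI[of _ t]) auto
  ultimately show ?thesis using ne by (auto simp: rel_interior_nonempty_interior)
qed

lemma radial_projection:
  fixes K :: "(real^'n) set"
  assumes K: "convex K" "compact K" "0 \<in> interior K"
  obtains r where "continuous_on (- {0}) r" "\<And>x. x \<noteq> 0 \<Longrightarrow> r x \<in> frontier K"
    "\<And>x. x \<in> K \<Longrightarrow> x \<noteq> 0 \<Longrightarrow> \<exists>t\<ge>1. r x = t *\<^sub>R x"
proof -
  have ne: "interior K \<noteq> {}" using K by blast
  have ri: "rel_interior K = interior K" by (rule rel_interior_nonempty_interior[OF ne])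
  have rf: "rel_frontier K = frontier K" by (rule rel_frontier_nonempty_interior[OF ne])
  have ah: "affine hull K = UNIV" by (rule affine_hull_nonempty_interior[OF ne])
  have bK: "bounded K" using K compact_imp_bounded by blast
  have "\<exists>d. 0 < d \<and> d *\<^sub>R l \<in> frontier K \<and> (\<forall>e. 0 \<le> e \<and> e < d \<longrightarrow> e *\<^sub>R l \<in> interior K)"
    if l0: "l \<noteq> 0" for l
  proof -
    have a1: "0 \<in> rel_interior K" using ri K by simp
    have a2: "0 + l \<in> affine hull K" using ah by simp
    obtain d where "0 < d" "0 + d *\<^sub>R l \<in> rel_frontier K"
      "\<And>e. \<lbrakk>0 \<le> e; e < d\<rbrakk> \<Longrightarrow> 0 + e *\<^sub>R l \<in> rel_interior K"
      using ray_to_rel_frontier[OF bK a1 a2 l0] by blast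
    then show ?thesis using ri rf by auto
  qed
  then obtain dd where dd1: "\<And>l. l \<noteq> 0 \<Longrightarrow> 0 < dd l \<and> dd l *\<^sub>R l \<in> frontier K"
    and dd2: "\<And>l e. l \<noteq> 0 \<Longrightarrow> 0 \<le> e \<Longrightarrow> e < dd l \<Longrightarrow> e *\<^sub>R l \<in> interior K"
    by metis
  have fi: "frontier K \<inter> interior K = {}" by (auto simp: frontier_def)
  have fc: "frontier K \<subseteq> closure K" by (auto simp: frontier_def)
  have iff: "(0 < k \<and> k *\<^sub>R x \<in> frontier K) \<longleftrightarrow> dd x = k" if x: "x \<in> UNIV - {0}" for x k
  proof
    assume "dd x = k" then show "0 < k \<and> k *\<^sub>R x \<in> frontier K" using dd1 x by auto
  next
    assume k: "0 < k \<and> k *\<^sub>R x \<in> frontier K"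
    have x0: "x \<noteq> 0" using x by simp
    have False if "k < dd x"
      using dd2[OF x0 _ that] k fi by auto
    moreover have False if lt: "dd x < k"
    proof -
      have "(dd x / k) *\<^sub>R (k *\<^sub>R x) \<in> interior K"
        by (rule scale_closure_interior[OF K(1,3)]) (use k fc lt dd1[OF x0] in auto)
      moreover have "(dd x / k) *\<^sub>R (k *\<^sub>R x) = dd x *\<^sub>R x" using k by simp
      ultimately show False using dd1[OF x0] fi by auto
    qed
    ultimately show "dd x = k" by fastforce
  qed
  have cont: "continuous_on (UNIV - {0}) (\<lambda>x. dd x *\<^sub>R x)"
  proof (rule continuous_on_compact_surface_projection)
    show "compact (frontier K)" using bK by (rule compact_frontier_bounded)
    show "frontier K \<subseteq> UNIV - {0}" using K(3) fi by auto
    show "Convex.cone (UNIV :: (real^'n) set)" by simp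
    show "\<And>x k. x \<in> UNIV - {0} \<Longrightarrow> (0 < k \<and> k *\<^sub>R x \<in> frontier K) = (dd x = k)" by (rule iff)
  qed
  show ?thesis
  proof
    show "continuous_on (- {0}) (\<lambda>x. dd x *\<^sub>R x)" using cont by (simp add: Compl_eq_Diff_UNIV)
    show "\<And>x. x \<noteq> 0 \<Longrightarrow> dd x *\<^sub>R x \<in> frontier K" using dd1 by blast
    show "\<exists>t\<ge>1. dd x *\<^sub>R x = t *\<^sub>R x" if x: "x \<in> K" "x \<noteq> 0" for x
    proof -
      have "dd x \<ge> 1"
      proof (rule ccontr)
        assume "\<not> dd x \<ge> 1"
        then have "dd x *\<^sub>R x \<in> interior K"
          using scale_closure_interior[OF K(1,3), of x "dd x"] x closure_subset dd1[OF x(2)] by auto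
        then show False using dd1[OF x(2)] fi by auto
      qed
      then show ?thesis by blast
    qed
  qed
qed

lemma eta_exists:
  fixes X1 X2 :: "(real^'n) set" and f g :: "real^'n \<Rightarrow> real^'n"
  assumes X1: "compact X1" and X2: "compact X2"
    and ge: "\<And>x y. x \<in> X1 \<Longrightarrow> y \<in> X2 \<Longrightarrow> x \<bullet> y \<ge> -1"
    and f: "continuous_on X1 f" and g: "continuous_on X2 g"
    and K: "\<And>x y. x \<in> X1 \<Longrightarrow> y \<in> X2 \<Longrightarrow> x \<bullet> y = -1 \<Longrightarrow> f x \<bullet> g y < 0"
  shows "\<exists>\<eta>>0. \<eta> \<le> 1 \<and> (\<forall>x\<in>X1. \<forall>y\<in>X2. x \<bullet> y < -1 + \<eta> \<longrightarrow> f x \<bullet> g y < 0)"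
proof (cases "X1 \<times> X2 = {}")
  case True
  then have "\<forall>x\<in>X1. \<forall>y\<in>X2. False" by blast
  then show ?thesis by (intro exI[of _ 1]) auto
next
  case False
  define F where "F p = (fst p \<bullet> snd p + 1) + max 0 (- (f (fst p) \<bullet> g (snd p)))" for p :: "(real^'n) \<times> (real^'n)"
  have c1: "continuous_on (X1 \<times> X2) (\<lambda>p. f (fst p))"
    by (rule continuous_on_compose2[OF f]) (auto intro: continuous_intros)
  have c2: "continuous_on (X1 \<times> X2) (\<lambda>p. g (snd p))"
    by (rule continuous_on_compose2[OF g]) (auto intro: continuous_intros)
  have "continuous_on (X1 \<times> X2) F"
    unfolding F_def by (intro continuous_intros c1 c2)
  then obtain p0 where p0: "p0 \<in> X1 \<times> X2" "\<forall>p\<in>X1 \<times> X2. F p0 \<le> F p"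
    using continuous_attains_inf[OF compact_Times[OF X1 X2] False] by blast
  have Fpos: "F p > 0" if "p \<in> X1 \<times> X2" for p
  proof -
    obtain x y where p0: "p = (x, y)" by (cases p)
    then have p: "p = (x, y)" "x \<in> X1" "y \<in> X2" using that by auto
    have "x \<bullet> y + 1 \<ge> 0" using ge[OF p(2,3)] by simp
    moreover have "x \<bullet> y + 1 = 0 \<Longrightarrow> max 0 (- (f x \<bullet> g y)) > 0" using K[OF p(2,3)] by simp
    ultimately show ?thesis unfolding F_def p(1) by fastforce
  qed
  define \<eta> where "\<eta> = min (F p0) 1"
  have "\<eta> > 0" using Fpos[OF p0(1)] by (simp add: \<eta>_def)
  moreover have "f x \<bullet> g y < 0" if "x \<in> X1" "y \<in> X2" "x \<bullet> y < -1 + \<eta>" for x y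
  proof (rule ccontr)
    assume "\<not> f x \<bullet> g y < 0"
    then have "F (x, y) = x \<bullet> y + 1" by (simp add: F_def)
    moreover have "F p0 \<le> F (x, y)" using p0(2) that by auto
    ultimately show False using that(3) by (simp add: \<eta>_def)
  qed
  ultimately show ?thesis by (intro exI[of _ \<eta>]) (auto simp: \<eta>_def)
qed

lemma phi_exists:
  fixes A1 X2 :: "(real^'n) set" and f g :: "real^'n \<Rightarrow> real^'n"
  assumes A1: "convex A1" "compact A1" "0 \<in> interior A1"
    and X2: "compact X2"
    and ge: "\<And>x y. x \<in> A1 \<Longrightarrow> y \<in> X2 \<Longrightarrow> x \<bullet> y \<ge> -1"
    and touch: "\<And>y. y \<in> X2 \<Longrightarrow> \<exists>x\<in>A1. x \<bullet> y \<le> -1"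
    and f: "continuous_on (frontier A1) f" and g: "continuous_on X2 g"
    and K: "\<And>x y. x \<in> frontier A1 \<Longrightarrow> y \<in> X2 \<Longrightarrow> x \<bullet> y = -1 \<Longrightarrow> f x \<bullet> g y < 0"
  shows "\<exists>\<phi>. continuous_on X2 \<phi> \<and> (\<forall>y\<in>X2. \<phi> y \<in> frontier A1 \<and> \<phi> y \<bullet> y < 0 \<and> f (\<phi> y) \<bullet> g y < 0)"
proof -
  have cA1: "closed A1" using A1 compact_imp_closed by blast
  have fA1: "frontier A1 \<subseteq> A1" using cA1 by (simp add: frontier_def closure_closed)
  have X1: "compact (frontier A1)" by (rule compact_frontier_bounded[OF compact_imp_bounded[OF A1(2)]])
  have ge1: "\<And>x y. x \<in> frontier A1 \<Longrightarrow> y \<in> X2 \<Longrightarrow> x \<bullet> y \<ge> -1"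
    using fA1 by (intro ge) auto
  obtain \<eta> where eta: "\<eta> > 0" "\<eta> \<le> 1"
    "\<And>x y. x \<in> frontier A1 \<Longrightarrow> y \<in> X2 \<Longrightarrow> x \<bullet> y < -1 + \<eta> \<Longrightarrow> f x \<bullet> g y < 0"
    using eta_exists[OF X1 X2 ge1 f g K] by blast
  have "bounded X2" by (rule compact_imp_bounded[OF X2])
  then obtain R where R: "R > 0" "\<And>y. y \<in> X2 \<Longrightarrow> norm y \<le> R"
    unfolding bounded_pos by blast
  define \<epsilon> where "\<epsilon> = \<eta> / (4 * R)"
  have \<epsilon>: "\<epsilon> > 0" using eta R by (simp add: \<epsilon>_def)
  have tb: "\<exists>k. finite k \<and> k \<subseteq> A1 \<and> A1 \<subseteq> (\<Union>x\<in>k. ball x \<epsilon>)"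
    using seq_compact_imp_totally_bounded[OF compact_imp_seq_compact[OF A1(2)], rule_format, OF \<epsilon>] .
  then obtain V where V: "finite V" "V \<subseteq> A1" "A1 \<subseteq> (\<Union>v\<in>V. ball v \<epsilon>)"
    by (elim exE conjE)
  define w where "w v y = max 0 (-1 + \<eta>/2 - v \<bullet> y)" for v y :: "real^'n"
  define W where "W y = (\<Sum>v\<in>V. w v y)" for y
  have w0: "w v y \<ge> 0" for v y by (simp add: w_def)
  have Wpos: "W y > 0" if y: "y \<in> X2" for y
  proof -
    obtain x where x: "x \<in> A1" "x \<bullet> y \<le> -1" using touch[OF y] by blast
    then obtain v where v: "v \<in> V" "dist v x < \<epsilon>" using V(3) by (force simp: dist_commute)
    have "\<bar>(v - x) \<bullet> y\<bar> \<le> norm (v - x) * norm y" by (rule Cauchy_Schwarz_ineq2)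
    also have "\<dots> \<le> \<epsilon> * R" using v R(2)[OF y] \<epsilon> by (intro mult_mono) (auto simp: dist_norm)
    also have "\<dots> = \<eta> / 4" using R by (simp add: \<epsilon>_def)
    finally have "\<bar>v \<bullet> y - x \<bullet> y\<bar> \<le> \<eta>/4" by (simp add: inner_diff_left)
    then have "v \<bullet> y \<le> x \<bullet> y + \<eta>/4" by linarith
    then have "w v y > 0" using x eta by (simp add: w_def)
    then show ?thesis unfolding W_def by (intro sum_pos2[OF V(1) v(1)]) (use w0 in auto)
  qed
  define \<phi>0 where "\<phi>0 y = (\<Sum>v\<in>V. (w v y / W y) *\<^sub>R v)" for y
  have c0: "continuous_on X2 \<phi>0"
    unfolding \<phi>0_def W_def w_def
    by (intro continuous_intros) (use Wpos W_def w_def in \<open>auto simp: less_le\<close>)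
  have p0A: "\<phi>0 y \<in> A1" if y: "y \<in> X2" for y
    unfolding \<phi>0_def
  proof (rule convex_sum[OF V(1) A1(1)])
    show "(\<Sum>v\<in>V. w v y / W y) = 1"
      using Wpos[OF y] unfolding W_def by (simp add: sum_divide_distrib[symmetric])
    show "\<And>v. v \<in> V \<Longrightarrow> 0 \<le> w v y / W y" using w0 Wpos[OF y] by simp
    show "\<And>v. v \<in> V \<Longrightarrow> v \<in> A1" using V(2) by blast
  qed
  have p0y: "\<phi>0 y \<bullet> y \<le> -1 + \<eta>/2" if y: "y \<in> X2" for y
  proof -
    have "\<phi>0 y \<bullet> y = (\<Sum>v\<in>V. (w v y / W y) * (v \<bullet> y))"
      unfolding \<phi>0_def by (simp add: inner_sum_left)
    also have "\<dots> \<le> (\<Sum>v\<in>V. (w v y / W y) * (-1 + \<eta>/2))"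
    proof (rule sum_mono)
      fix v assume "v \<in> V"
      show "(w v y / W y) * (v \<bullet> y) \<le> (w v y / W y) * (-1 + \<eta>/2)"
      proof (cases "w v y > 0")
        case True
        then have "v \<bullet> y < -1 + \<eta>/2" by (simp add: w_def)
        then show ?thesis using True Wpos[OF y] by (intro mult_left_mono) auto
      next
        case False
        then have "w v y = 0" using w0 by (simp add: less_le)
        then show ?thesis by simp
      qed
    qed
    also have "\<dots> = (\<Sum>v\<in>V. w v y / W y) * (-1 + \<eta>/2)" by (simp add: sum_distrib_right)
    also have "(\<Sum>v\<in>V. w v y / W y) = 1"
      using Wpos[OF y] unfolding W_def by (simp add: sum_divide_distrib[symmetric])
    finally show ?thesis by simp
  qed
  have p0ne: "\<phi>0 y \<noteq> 0" if "y \<in> X2" for y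
    using p0y[OF that] eta by auto
  obtain r where r: "continuous_on (- {0}) r" "\<And>x. x \<noteq> 0 \<Longrightarrow> r x \<in> frontier A1"
    "\<And>x. x \<in> A1 \<Longrightarrow> x \<noteq> 0 \<Longrightarrow> \<exists>t\<ge>1. r x = t *\<^sub>R x"
    using radial_projection[OF A1] by blast
  define \<phi> where "\<phi> y = r (\<phi>0 y)" for y
  have "continuous_on X2 \<phi>"
    unfolding \<phi>_def by (rule continuous_on_compose2[OF r(1) c0]) (use p0ne in auto)
  moreover have "\<phi> y \<in> frontier A1 \<and> \<phi> y \<bullet> y < 0 \<and> f (\<phi> y) \<bullet> g y < 0" if y: "y \<in> X2" for y
  proof -
    have fr: "\<phi> y \<in> frontier A1" unfolding \<phi>_def using r(2) p0ne[OF y] by blast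
    obtain t where t: "t \<ge> 1" "\<phi> y = t *\<^sub>R \<phi>0 y"
      using r(3)[OF p0A[OF y] p0ne[OF y]] unfolding \<phi>_def by blast
    have neg: "\<phi>0 y \<bullet> y < 0" using p0y[OF y] eta by simp
    have "\<phi> y \<bullet> y = t * (\<phi>0 y \<bullet> y)" using t by simp
    also have "\<dots> \<le> \<phi>0 y \<bullet> y" using t(1) neg by (simp add: mult_le_cancel_right1 less_imp_le)
    finally have le: "\<phi> y \<bullet> y \<le> -1 + \<eta>/2" using p0y[OF y] by simp
    then have "\<phi> y \<bullet> y < 0" using eta by simp
    moreover have "f (\<phi> y) \<bullet> g y < 0" using eta(3)[OF fr y] le eta by simp
    ultimately show ?thesis using fr by blast
  qed
  ultimately show ?thesis by blast
qed

lemma degree_transfer: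
  fixes X1 X2 :: "(real^'n) set" and f g \<phi> :: "real^'n \<Rightarrow> real^'n" and d :: int
  assumes \<phi>: "continuous_map (top_of_set X2) (top_of_set X1) \<phi>"
    and f: "continuous_map (top_of_set X1) (top_of_set (- {0})) f"
    and g: "continuous_map (top_of_set X2) (top_of_set (- {0})) g"
    and X1: "X1 \<subseteq> - {0}" and X2: "X2 \<subseteq> - {0}"
    and h1: "homotopic_with (\<lambda>h. True) (top_of_set X2) (top_of_set (- {0})) (f \<circ> \<phi>) (uminus \<circ> g)"
    and h2: "homotopic_with (\<lambda>h. True) (top_of_set X2) (top_of_set (- {0})) \<phi> uminus"
    and deg: "\<forall>c\<in>carrier (reduced_homology_group p (top_of_set X1)).
        hom_induced p (top_of_set X1) {} (top_of_set (- {0})) {} f c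
      = pow (homology_group p (top_of_set (- {0})))
            (hom_induced p (top_of_set X1) {} (top_of_set (- {0})) {} id c) d"
  shows "\<forall>c\<in>carrier (reduced_homology_group p (top_of_set X2)).
        hom_induced p (top_of_set X2) {} (top_of_set (- {0})) {} g c
      = pow (homology_group p (top_of_set (- {0})))
            (hom_induced p (top_of_set X2) {} (top_of_set (- {0})) {} id c) d"
proof
  fix c assume c: "c \<in> carrier (reduced_homology_group p (top_of_set X2))"
  define Z where "Z = top_of_set (- {0::real^'n})"
  define N where "N = hom_induced p Z {} Z {} (uminus :: real^'n \<Rightarrow> real^'n)"
  have cmN: "continuous_map Z Z uminus"
    unfolding Z_def by (auto intro!: continuous_intros)
  have id1: "continuous_map (top_of_set X1) Z id" unfolding Z_def using X1 by auto
  have id2: "continuous_map (top_of_set X2) Z id" unfolding Z_def using X2 by auto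
  have f': "continuous_map (top_of_set X1) Z f" using f by (simp add: Z_def)
  have g': "continuous_map (top_of_set X2) Z g" using g by (simp add: Z_def)
  have NN: "N (N x) = x" if "x \<in> carrier (homology_group p Z)" for x
  proof -
    have "N (N x) = hom_induced p Z {} Z {} (uminus \<circ> uminus) x"
      unfolding N_def using hom_induced_compose_empty[OF cmN cmN] by simp
    also have "uminus \<circ> uminus = (id :: real^'n \<Rightarrow> real^'n)" by (auto simp: fun_eq_iff)
    also have "hom_induced p Z {} Z {} id x = x" using that by (rule hom_induced_id)
    finally show ?thesis .
  qed
  have Nhom: "N \<in> hom (homology_group p Z) (homology_group p Z)"
    unfolding N_def by (rule hom_induced_empty_hom)
  define c1 where "c1 = hom_induced p (top_of_set X2) {} (top_of_set X1) {} \<phi> c"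
  have c1: "c1 \<in> carrier (reduced_homology_group p (top_of_set X1))"
    unfolding c1_def using c by (rule hom_induced_reduced)
  have E1: "hom_induced p (top_of_set X1) {} Z {} f c1 = N (hom_induced p (top_of_set X2) {} Z {} g c)"
  proof -
    have "hom_induced p (top_of_set X1) {} Z {} f c1 = hom_induced p (top_of_set X2) {} Z {} (f \<circ> \<phi>) c"
      unfolding c1_def using hom_induced_compose_empty[OF \<phi> f'] by simp
    also have "\<dots> = hom_induced p (top_of_set X2) {} Z {} (uminus \<circ> g) c"
      using homology_homotopy_empty[OF h1[folded Z_def]] by simp
    also have "\<dots> = N (hom_induced p (top_of_set X2) {} Z {} g c)"
      unfolding N_def using hom_induced_compose_empty[OF g' cmN] by simp
    finally show ?thesis .
  qed
  have E2: "hom_induced p (top_of_set X1) {} Z {} id c1 = N (hom_induced p (top_of_set X2) {} Z {} id c)"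
  proof -
    have "hom_induced p (top_of_set X1) {} Z {} id c1 = hom_induced p (top_of_set X2) {} Z {} (id \<circ> \<phi>) c"
      unfolding c1_def using hom_induced_compose_empty[OF \<phi> id1] by simp
    also have "id \<circ> \<phi> = \<phi>" by simp
    also have "hom_induced p (top_of_set X2) {} Z {} \<phi> c = hom_induced p (top_of_set X2) {} Z {} uminus c"
      using homology_homotopy_empty[OF h2[folded Z_def]] by simp
    also have "uminus = uminus \<circ> (id :: real^'n \<Rightarrow> real^'n)" by simp
    also have "hom_induced p (top_of_set X2) {} Z {} (uminus \<circ> id) c = N (hom_induced p (top_of_set X2) {} Z {} id c)"
      unfolding N_def using hom_induced_compose_empty[OF id2 cmN] by simp
    finally show ?thesis .
  qed
  define a where "a = hom_induced p (top_of_set X2) {} Z {} g c"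
  define b where "b = hom_induced p (top_of_set X2) {} Z {} id c"
  have a: "a \<in> carrier (homology_group p Z)" unfolding a_def by (rule hom_induced_carrier)
  have b: "b \<in> carrier (homology_group p Z)" unfolding b_def by (rule hom_induced_carrier)
  have "N a = pow (homology_group p Z) (N b) d"
    using deg[rule_format, OF c1] E1 E2 unfolding a_def b_def Z_def by simp
  also have "\<dots> = N (pow (homology_group p Z) b d)"
    by (rule hom_int_pow[OF Nhom b, symmetric]) simp_all
  finally have "N (N a) = N (N (pow (homology_group p Z) b d))" by simp
  moreover have "pow (homology_group p Z) b d \<in> carrier (homology_group p Z)"
    using b by (simp add: group.int_pow_closed)
  ultimately have "a = pow (homology_group p Z) b d" using NN a by simp
  then show "hom_induced p (top_of_set X2) {} (top_of_set (- {0})) {} g c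
      = pow (homology_group p (top_of_set (- {0})))
            (hom_induced p (top_of_set X2) {} (top_of_set (- {0})) {} id c) d"
    unfolding a_def b_def Z_def .
qed

lemma segment_avoid:
  fixes a b :: "real^'n"
  assumes "a \<bullet> b < 0"
  shows "closed_segment a (- b) \<subseteq> - {0}"
proof
  fix z assume z: "z \<in> closed_segment a (- b)"
  then obtain u where u: "0 \<le> u" "u \<le> 1" "z = (1 - u) *\<^sub>R a + u *\<^sub>R (- b)"
    unfolding in_segment by blast
  show "z \<in> - {0}"
  proof
    assume "z \<in> {0}"
    then have z0: "(1 - u) *\<^sub>R a + u *\<^sub>R (- b) = 0" using u by simp
    then have "((1 - u) *\<^sub>R a + u *\<^sub>R (- b)) \<bullet> b = 0" by simp
    then have eq: "(1 - u) * (a \<bullet> b) = u * (b \<bullet> b)" by (simp add: algebra_simps inner_add_left)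
    have "(1 - u) * (a \<bullet> b) \<le> 0" using u assms by (simp add: mult_nonneg_nonpos)
    moreover have "u * (b \<bullet> b) \<ge> 0" using u by simp
    ultimately have "(1 - u) * (a \<bullet> b) = 0" "u * (b \<bullet> b) = 0" using eq by linarith+
    then have "u = 1" using assms by simp
    then have "b \<bullet> b = 0" using \<open>u * (b \<bullet> b) = 0\<close> by simp
    then have "b = 0" by simp
    then show False using assms by simp
  qed
qed

lemma transfer:
  fixes A1 A2 B1 B2 :: "(real^'n) set" and f g :: "real^'n \<Rightarrow> real^'n"
  assumes A1: "convex A1" "compact A1" "0 \<in> interior A1"
    and A2: "bounded A2" "0 \<in> interior A2"
    and ge: "\<And>x y. x \<in> A1 \<Longrightarrow> y \<in> frontier A2 \<Longrightarrow> x \<bullet> y \<ge> -1"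
    and touch: "\<And>y. y \<in> frontier A2 \<Longrightarrow> \<exists>x\<in>A1. x \<bullet> y \<le> -1"
    and f: "continuous_map (top_of_set (frontier A1)) (top_of_set (frontier B1)) f"
    and B1: "0 \<in> interior B1"
    and g: "continuous_map (top_of_set (frontier A2)) (top_of_set (frontier B2)) g"
    and B2: "0 \<in> interior B2"
    and K: "\<And>x y. x \<in> frontier A1 \<Longrightarrow> y \<in> frontier A2 \<Longrightarrow> x \<bullet> y = -1 \<Longrightarrow> f x \<bullet> g y < 0"
    and deg: "map_degree_is A1 B1 f d"
  shows "map_degree_is A2 B2 g d"
proof -
  have nz: "frontier S \<subseteq> - {0}" if "0 \<in> interior S" for S :: "(real^'n) set"
    using that by (auto simp: frontier_def)
  have fc: "continuous_on (frontier A1) f" "\<And>x. x \<in> frontier A1 \<Longrightarrow> f x \<in> frontier B1"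
    using f by (auto simp: continuous_map_subtopology_eu)
  have gc: "continuous_on (frontier A2) g" "\<And>x. x \<in> frontier A2 \<Longrightarrow> g x \<in> frontier B2"
    using g by (auto simp: continuous_map_subtopology_eu)
  have X2: "compact (frontier A2)" using A2(1) by (rule compact_frontier_bounded)
  obtain \<phi> where \<phi>: "continuous_on (frontier A2) \<phi>"
    "\<And>y. y \<in> frontier A2 \<Longrightarrow> \<phi> y \<in> frontier A1 \<and> \<phi> y \<bullet> y < 0 \<and> f (\<phi> y) \<bullet> g y < 0"
    using phi_exists[OF A1 X2 ge touch fc(1) gc(1) K] by blast
  show ?thesis
    unfolding map_degree_is_def
  proof (rule degree_transfer[where \<phi>=\<phi> and f=f])
    show "continuous_map (top_of_set (frontier A2)) (top_of_set (frontier A1)) \<phi>"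
      using \<phi> by (auto simp: continuous_map_subtopology_eu)
    show "continuous_map (top_of_set (frontier A1)) (top_of_set (- {0})) f"
    proof -
      have "f \<in> frontier A1 \<rightarrow> - {0}"
        by (intro Pi_I) (use fc(2) nz[OF B1] in blast)
      then show ?thesis using fc(1) by simp
    qed
    show "continuous_map (top_of_set (frontier A2)) (top_of_set (- {0})) g"
    proof -
      have "g \<in> frontier A2 \<rightarrow> - {0}"
        by (intro Pi_I) (use gc(2) nz[OF B2] in blast)
      then show ?thesis using gc(1) by simp
    qed
    show "frontier A1 \<subseteq> - {0}" by (rule nz[OF A1(3)])
    show "frontier A2 \<subseteq> - {0}" by (rule nz[OF A2(2)])
    show "homotopic_with (\<lambda>h. True) (top_of_set (frontier A2)) (top_of_set (- {0})) (f \<circ> \<phi>) (uminus \<circ> g)"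
    proof (rule homotopic_with_linear)
      show "continuous_on (frontier A2) (f \<circ> \<phi>)"
        using \<phi> by (intro continuous_on_compose continuous_on_subset[OF fc(1)]) auto
      show "continuous_on (frontier A2) (uminus \<circ> g)"
        using gc(1) by (intro continuous_on_compose continuous_intros) auto
      show "closed_segment ((f \<circ> \<phi>) y) ((uminus \<circ> g) y) \<subseteq> - {0}" if "y \<in> frontier A2" for y
        using segment_avoid[of "f (\<phi> y)" "g y"] \<phi>(2)[OF that] by simp
    qed
    show "homotopic_with (\<lambda>h. True) (top_of_set (frontier A2)) (top_of_set (- {0})) \<phi> uminus"
    proof (rule homotopic_with_linear)
      show "continuous_on (frontier A2) \<phi>" by (rule \<phi>(1))
      show "continuous_on (frontier A2) uminus" by (intro continuous_intros)
      show "closed_segment (\<phi> y) (- y) \<subseteq> - {0}" if "y \<in> frontier A2" for y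
        using segment_avoid[of "\<phi> y" y] \<phi>(2)[OF that] by simp
    qed
    show "\<forall>c\<in>carrier (reduced_homology_group (int CARD('n) - 1) (top_of_set (frontier A1))).
       hom_induced (int CARD('n) - 1) (top_of_set (frontier A1)) {} (top_of_set (- {0})) {} f c =
       pow (homology_group (int CARD('n) - 1) (top_of_set (- {0})))
        (hom_induced (int CARD('n) - 1) (top_of_set (frontier A1)) {} (top_of_set (- {0})) {} id c) d"
      using deg unfolding map_degree_is_def .
  qed
qed

lemma K_lemma:
  fixes P Q :: "(real^'n) set"
  assumes P: "polytope P" "0 \<in> interior P" and Q: "polytope Q" "0 \<in> interior Q"
    and f: "characteristic_map P Q \<psi> f"
    and g: "characteristic_map (polar P) (polar Q) (dual_map P Q \<psi>) g"
    and x: "x \<in> frontier P" and y: "y \<in> frontier (polar P)" and xy: "x \<bullet> y = -1"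
  shows "f x \<bullet> g y = -1"
proof -
  define G where "G = {x' \<in> P. x' \<bullet> y = -1}"
  have G: "G \<in> proper_faces P" unfolding G_def by (rule frontier_polar_proper_face(1)[OF P y])
  have yP: "y \<in> polar P" by (rule frontier_polar_proper_face(2)[OF P y])
  have "closed P" using P(1) polytope_imp_closed by blast
  then have xP: "x \<in> P" using x by (simp add: frontier_def closure_closed)
  have xG: "x \<in> G" using xP xy by (simp add: G_def)
  have fG: "f ` G \<subseteq> \<psi> G" using f G by (simp add: characteristic_map_def)
  then have fx: "f x \<in> \<psi> G" using xG by blast
  have H: "dual_face P G \<in> proper_faces (polar P)" by (rule dual_face_props(1)[OF P G])
  have yH: "y \<in> dual_face P G" using yP by (simp add: dual_face_def G_def)
  have "g ` dual_face P G \<subseteq> dual_map P Q \<psi> (dual_face P G)"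
    using g H by (simp add: characteristic_map_def)
  then have "g y \<in> dual_face Q (\<psi> G)" using yH dual_map_eq[OF P G] by blast
  then show ?thesis using fx by (simp add: dual_face_def)
qed

theorem proposition1p2:
  fixes P Q :: "(real^'n) set" and \<psi> :: "(real^'n) set \<Rightarrow> (real^'n) set"
  assumes "polytope P" and "polytope Q"
    and "0 \<in> interior P" and "0 \<in> interior Q"
    and "order_preserving_faces P Q \<psi>"
  shows "cdeg P Q \<psi> = cdeg (polar P) (polar Q) (dual_map P Q \<psi>)"
proof -
  note P = assms(1,3) and Q = assms(2,4) and op = assms(5)
  have cP: "convex P" "compact P" "bounded P" "closed P"
    using P(1) polytope_imp_convex polytope_imp_compact polytope_imp_bounded polytope_imp_closed by blast+
  have bQ: "bounded Q" using Q(1) polytope_imp_bounded by blast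
  have Pne: "P \<noteq> {}" using P(2) interior_subset by blast
  have zP: "0 \<in> interior (polar P)" by (rule zero_interior_polar[OF cP(3)])
  have zQ: "0 \<in> interior (polar Q)" by (rule zero_interior_polar[OF bQ])
  have fP: "y \<in> P" if "y \<in> frontier P" for y
    using that cP(4) by (simp add: frontier_def closure_closed)
  have e: "(\<exists>f. characteristic_map P Q \<psi> f \<and> map_degree_is P Q f d) \<longleftrightarrow>
           (\<exists>g. characteristic_map (polar P) (polar Q) (dual_map P Q \<psi>) g \<and> map_degree_is (polar P) (polar Q) g d)"
    for d
  proof
    assume "\<exists>f. characteristic_map P Q \<psi> f \<and> map_degree_is P Q f d"
    then obtain f where f: "characteristic_map P Q \<psi> f" "map_degree_is P Q f d" by blast
    obtain g where g: "characteristic_map (polar P) (polar Q) (dual_map P Q \<psi>) g"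
      using char_exists_dual[OF P Q op] by blast
    have "map_degree_is (polar P) (polar Q) g d"
    proof (rule transfer[where ?A1.0=P and ?B1.0=Q and f=f])
      show "convex P" "compact P" "0 \<in> interior P" by (simp_all add: cP P)
      show "bounded (polar P)" by (rule bounded_polar[OF P(2)])
      show "0 \<in> interior (polar P)" by (rule zP)
      show "\<And>x y. x \<in> P \<Longrightarrow> y \<in> frontier (polar P) \<Longrightarrow> x \<bullet> y \<ge> -1"
        using polar_ge frontier_polar_proper_face(2)[OF P] by blast
      show "\<And>y. y \<in> frontier (polar P) \<Longrightarrow> \<exists>x\<in>P. x \<bullet> y \<le> -1"
        using frontier_polar_touch[OF cP(2) Pne] by blast
      show "continuous_map (top_of_set (frontier P)) (top_of_set (frontier Q)) f"
        using f(1) by (simp add: characteristic_map_def)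
      show "0 \<in> interior Q" by (rule Q(2))
      show "continuous_map (top_of_set (frontier (polar P))) (top_of_set (frontier (polar Q))) g"
        using g by (simp add: characteristic_map_def)
      show "0 \<in> interior (polar Q)" by (rule zQ)
      show "\<And>x y. x \<in> frontier P \<Longrightarrow> y \<in> frontier (polar P) \<Longrightarrow> x \<bullet> y = -1 \<Longrightarrow> f x \<bullet> g y < 0"
        using K_lemma[OF P Q f(1) g] by simp
      show "map_degree_is P Q f d" by (rule f(2))
    qed
    then show "\<exists>g. characteristic_map (polar P) (polar Q) (dual_map P Q \<psi>) g \<and> map_degree_is (polar P) (polar Q) g d"
      using g by blast
  next
    assume "\<exists>g. characteristic_map (polar P) (polar Q) (dual_map P Q \<psi>) g \<and> map_degree_is (polar P) (polar Q) g d"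
    then obtain g where g: "characteristic_map (polar P) (polar Q) (dual_map P Q \<psi>) g"
      "map_degree_is (polar P) (polar Q) g d" by blast
    obtain f where f: "characteristic_map P Q \<psi> f"
      using char_exists[OF P Q op] by blast
    have "map_degree_is P Q f d"
    proof (rule transfer[where ?A1.0="polar P" and ?B1.0="polar Q" and f=g])
      show "convex (polar P)" by (rule convex_polar)
      show "compact (polar P)" by (rule compact_polar[OF P(2)])
      show "0 \<in> interior (polar P)" by (rule zP)
      show "bounded P" by (rule cP(3))
      show "0 \<in> interior P" by (rule P(2))
      show "\<And>x y. x \<in> polar P \<Longrightarrow> y \<in> frontier P \<Longrightarrow> x \<bullet> y \<ge> -1"
        using polar_ge fP inner_commute by metis
      show "\<exists>x\<in>polar P. x \<bullet> y \<le> -1" if yF: "y \<in> frontier P" for y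
      proof -
        obtain x where "x \<in> polar P" "y \<bullet> x = -1" using frontier_touch[OF cP(1) P(2) yF] by blast
        then show ?thesis by (intro bexI[of _ x]) (simp_all add: inner_commute)
      qed
      show "continuous_map (top_of_set (frontier (polar P))) (top_of_set (frontier (polar Q))) g"
        using g(1) by (simp add: characteristic_map_def)
      show "0 \<in> interior (polar Q)" by (rule zQ)
      show "continuous_map (top_of_set (frontier P)) (top_of_set (frontier Q)) f"
        using f by (simp add: characteristic_map_def)
      show "0 \<in> interior Q" by (rule Q(2))
      show "g x \<bullet> f y < 0" if xy: "x \<in> frontier (polar P)" "y \<in> frontier P" "x \<bullet> y = -1" for x y
      proof -
        have "f y \<bullet> g x = -1" by (rule K_lemma[OF P Q f g(1) xy(2,1)]) (use xy(3) in \<open>simp add: inner_commute\<close>)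
        then show ?thesis by (simp add: inner_commute)
      qed
      show "map_degree_is (polar P) (polar Q) g d" by (rule g(2))
    qed
    then show "\<exists>f. characteristic_map P Q \<psi> f \<and> map_degree_is P Q f d" using f by blast
  qed
  show ?thesis unfolding cdeg_def using e by simp
qed

end
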